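(* Let $\mathcal{I}=\{1,\dots,\mathbf{I}\}$ be a nonempty finite index set, $\{n^i, i\in\mathcal{I}\}$ a finite collection of $d$-dimensional vectors of unit length, $\beta=(\beta_1,\dots,\beta_{\mathbf{I}})'\in\mathbb{R}^{\mathbf{I}}$, and $G_i=\{x\in\mathbb{R}^d:\langle n^i,x\rangle>\beta_i\}$ for $i\in\mathcal{I}$. Suppose $G=\bigcap_{i\in\mathcal{I}} G_i$ is a nonempty domain (so $\overline{G}$ is a convex polyhedron) and that $\partial G_i\cap\partial G\neq\emptyset$ for each $i\in\mathcal{I}$. Then: (a) for each $\varepsilon\in(0,1)$ there exists $R(\varepsilon)>0$ such that for each $i\in\mathcal{I}$, $x\in\partial G_i\cap\partial G$ and $y\in\overline{G}$ with $\|x-y\|<R(\varepsilon)$, we have $\langle n^i, y-x\rangle\ge -\varepsilon\|x-y\|$; and (b) the function $D:[0,\infty)\to[0,\infty]$ defined by $D(0)=0$ and, for $r>0$, $$D(r)=\sup_{\emptyset\neq\mathcal{J}\subset\mathcal{I}}\ \sup\Big\{\operatorname{dist}\Big(x,\bigcap_{j\in\mathcal{J}}(\partial G_j\cap\partial G)\Big): x\in\bigcap_{j\in\mathcal{J}}U_r(\partial G_j\cap\partial G)\Big\}$$ satisfies $D(r)\to 0$ as $r\to 0$.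
   Context: $U_r(S)=\{x\in\mathbb{R}^d:\operatorname{dist}(x,S)\le r\}$ (with $U_r(\emptyset)=\emptyset$), $\operatorname{dist}(x,\emptyset)=\infty$, and the supremum over an empty set is taken to be zero. $\overline{G}$ is the closure and $\partial G$ the boundary of $G$. *)

theory Defs
  imports "HOL-Analysis.Analysis"
begin

definition nbhd :: "real \<Rightarrow> 'a::metric_space set \<Rightarrow> 'a set" where
  "nbhd r S = (if S = {} then {} else {x. infdist x S \<le> r})"

definition set_dist_inf :: "'a::metric_space \<Rightarrow> 'a set \<Rightarrow> ennreal" where
  "set_dist_inf x S = (if S = {} then top else ennreal (infdist x S))"

text \<open>The function D of the statement, for faces F j (j in I). Suprema are taken in
  ennreal, so the supremum of the empty set is 0.\<close>
definition Dfun :: "'i set \<Rightarrow> ('i \<Rightarrow> 'a::metric_space set) \<Rightarrow> real \<Rightarrow> ennreal" where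
  "Dfun I F r = (if r = 0 then 0 else
     (SUP J\<in>{J. J \<noteq> {} \<and> J \<subseteq> I}.
        (SUP x\<in>(\<Inter>j\<in>J. nbhd r (F j)). set_dist_inf x (\<Inter>j\<in>J. F j))))"

end

theory Submission imports Defs begin

lemma infdist_lt_ex:
  fixes A :: "'a::metric_space set"
  assumes "A \<noteq> {}" "infdist x A < e"
  shows "\<exists>a\<in>A. dist x a < e"
proof -
  have "Inf ((\<lambda>a. dist x a) ` A) < e" using assms infdist_notempty by metis
  then obtain y where "y \<in> (\<lambda>a. dist x a) ` A" "y < e"
    using cInf_lessD[of "(\<lambda>a. dist x a) ` A" e] assms(1) by blast
  then show ?thesis by blast
qed

lemma hoffman_qual:
  fixes K :: "('a::euclidean_space \<times> real) set"
  assumes "finite K" "\<epsilon> > 0"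
  shows "\<exists>\<delta>>0. \<forall>x. (\<forall>(a,b)\<in>K. a \<bullet> x \<ge> b - \<delta>) \<longrightarrow>
           (\<exists>s. (\<forall>(a,b)\<in>K. a \<bullet> s \<ge> b) \<and> dist x s \<le> \<epsilon>)"
  using assms
proof (induction K arbitrary: \<epsilon> rule: finite_psubset_induct)
  case (psubset K)
  define Sf where "Sf = (\<lambda>s. \<forall>(a,b)\<in>K. a \<bullet> s \<ge> b)"
  define bad where "bad = (\<lambda>x. \<not> (\<exists>s. Sf s \<and> dist x s \<le> \<epsilon>))"
  define rel where "rel = (\<lambda>x \<delta>. \<forall>(a,b)\<in>K. a \<bullet> x \<ge> b - \<delta>)"
  show ?case
  proof (rule ccontr)
    assume H0: "\<not> ?case"
    have H: "\<exists>x. rel x \<delta> \<and> bad x" if "\<delta> > 0" for \<delta>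
      using H0 that unfolding rel_def bad_def Sf_def by blast
    have H1: "\<exists>x\<in>span (fst ` K). rel x \<delta> \<and> bad x" if dp: "\<delta> > 0" for \<delta>
    proof -
      obtain x where x: "rel x \<delta>" "bad x" using H[OF dp] by blast
      obtain y z where yz: "y \<in> span (fst ` K)" "\<And>w. w \<in> span (fst ` K) \<Longrightarrow> orthogonal z w" "x = y + z"
        using orthogonal_subspace_decomp_exists[of "fst ` K" x] by blast
      have az: "a \<bullet> z = 0" if "(a,b) \<in> K" for a b
      proof -
        have "a \<in> span (fst ` K)" using that by (metis fst_conv image_eqI span_base)
        then show ?thesis using yz(2) by (simp add: orthogonal_def inner_commute)
      qed
      have "rel y \<delta>" using x(1) az unfolding rel_def yz(3) by (auto simp: inner_add_right)
      moreover have "bad y"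
      proof -
        { fix s assume s: "Sf s" "dist y s \<le> \<epsilon>"
          have "Sf (s + z)" using s(1) az unfolding Sf_def by (auto simp: inner_add_right)
          moreover have "dist x (s + z) \<le> \<epsilon>" using s(2) yz(3) by (simp add: dist_norm algebra_simps)
          ultimately have False using x(2) unfolding bad_def by blast }
        then show ?thesis unfolding bad_def by blast
      qed
      ultimately show ?thesis using yz(1) by blast
    qed
    have "\<forall>m. \<exists>x. x \<in> span (fst ` K) \<and> rel x (1 / (real m + 1)) \<and> bad x"
    proof
      fix m :: nat
      have "(0::real) < 1 / (real m + 1)" by (simp add: add_nonneg_pos)
      from H1[OF this] show "\<exists>x. x \<in> span (fst ` K) \<and> rel x (1 / (real m + 1)) \<and> bad x" by blast
    qed
    then obtain X where X: "\<And>m. X m \<in> span (fst ` K)" "\<And>m. rel (X m) (1 / (real m + 1))" "\<And>m. bad (X m)"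
      by metis
    define V where "V = (\<lambda>m. ((1 / (1 + norm (X m))) *\<^sub>R X m, 1 / (1 + norm (X m))))"
    have Vin: "V m \<in> cball 0 1 \<times> {0..1}" for m
    proof -
      have "norm ((1 / (1 + norm (X m))) *\<^sub>R X m) \<le> 1"
        by (simp add: divide_le_eq_1 add_pos_nonneg)
      then show ?thesis unfolding V_def by (auto simp: divide_le_eq_1 add_pos_nonneg)
    qed
    have "seq_compact (cball (0::'a) 1 \<times> {0..(1::real)})"
      by (intro compact_imp_seq_compact compact_Times) auto
    then obtain l r where lr: "l \<in> cball 0 1 \<times> {0..1}" "strict_mono r" "(V \<circ> r) \<longlonglongrightarrow> l"
      using seq_compactE Vin by metis
    obtain w t where l: "l = (w, t)" by (cases l)
    define wm where "wm = (\<lambda>m. (1 / (1 + norm (X (r m)))) *\<^sub>R X (r m))"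
    define tm where "tm = (\<lambda>m. 1 / (1 + norm (X (r m))))"
    have wlim: "wm \<longlonglongrightarrow> w" and tlim: "tm \<longlonglongrightarrow> t"
      using tendsto_fst[OF lr(3)] tendsto_snd[OF lr(3)] unfolding l wm_def tm_def V_def
      by (simp_all add: o_def)
    have tpos: "tm m > 0" for m unfolding tm_def by (simp add: add_pos_nonneg)
    have Xeq: "X (r m) = (1 / tm m) *\<^sub>R wm m" for m
      unfolding tm_def wm_def using tpos[of m] by (simp add: tm_def)
    have dlim: "(\<lambda>m. 1 / (real (r m) + 1)) \<longlonglongrightarrow> 0"
    proof -
      have "(\<lambda>m. 1 / (real m + 1)) \<longlonglongrightarrow> (0::real)"
        using LIMSEQ_inverse_real_of_nat by (simp add: inverse_eq_divide add.commute)
      from LIMSEQ_subseq_LIMSEQ[OF this lr(2)] show ?thesis by (simp add: o_def)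
    qed
    have t0: "t \<ge> 0" using lr(1) l by auto
    show False
    proof (cases "t > 0")
      case True
      have Xlim: "(\<lambda>m. X (r m)) \<longlonglongrightarrow> (1 / t) *\<^sub>R w"
        unfolding Xeq using True by (intro tendsto_intros wlim tlim) auto
      have "Sf ((1 / t) *\<^sub>R w)"
        unfolding Sf_def
      proof (clarify)
        fix a b assume ab: "(a,b) \<in> K"
        have "(\<lambda>m. a \<bullet> X (r m)) \<longlonglongrightarrow> a \<bullet> ((1 / t) *\<^sub>R w)"
          by (intro tendsto_intros Xlim)
        moreover have "(\<lambda>m. b - 1 / (real (r m) + 1)) \<longlonglongrightarrow> b - 0"
          by (intro tendsto_intros dlim)
        moreover have "b - 1 / (real (r m) + 1) \<le> a \<bullet> X (r m)" for m
          using X(2)[of "r m"] ab unfolding rel_def by auto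
        ultimately show "b \<le> a \<bullet> ((1 / t) *\<^sub>R w)"
          using LIMSEQ_le by fastforce
      qed
      moreover have "\<forall>\<^sub>F m in sequentially. dist (X (r m)) ((1 / t) *\<^sub>R w) < \<epsilon>"
        using Xlim psubset.prems by (rule tendstoD)
      then obtain m where "dist (X (r m)) ((1 / t) *\<^sub>R w) < \<epsilon>"
        using eventually_sequentially by auto
      ultimately show False using X(3)[of "r m"] unfolding bad_def by force
    next
      case False
      then have t: "t = 0" using t0 by simp
      define d where "d = (\<lambda>m. 1 / (real (r m) + 1))"
      have nw: "norm (wm m) = 1 - tm m" for m
      proof -
        have "1 + norm (X (r m)) > 0" by (simp add: add_pos_nonneg)
        then show ?thesis unfolding wm_def tm_def by (simp add: field_simps)
      qed
      have "(\<lambda>m. norm (wm m)) \<longlonglongrightarrow> norm w" by (intro tendsto_intros wlim)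
      moreover have "(\<lambda>m. norm (wm m)) \<longlonglongrightarrow> 1 - 0" unfolding nw
        using tlim t by (intro tendsto_intros) auto
      ultimately have nw1: "norm w = 1" using LIMSEQ_unique by fastforce
      have wspan: "w \<in> span (fst ` K)"
        using closed_sequentially[OF closed_span _ wlim] X(1) unfolding wm_def
        by (simp add: span_mul)
      have wm_ge: "a \<bullet> wm m \<ge> tm m * (b - d m)" if "(a,b) \<in> K" for a b m
      proof -
        have "b - d m \<le> a \<bullet> X (r m)" using X(2)[of "r m"] that unfolding rel_def d_def by auto
        then have "tm m * (b - d m) \<le> tm m * (a \<bullet> X (r m))"
          using tpos[of m] by (intro mult_left_mono) auto
        then show ?thesis unfolding wm_def tm_def by (simp add: inner_scaleR_right)
      qed
      have aw_ge: "a \<bullet> w \<ge> 0" if ab: "(a,b) \<in> K" for a b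
      proof -
        have "(\<lambda>m. a \<bullet> wm m) \<longlonglongrightarrow> a \<bullet> w" by (intro tendsto_intros wlim)
        moreover have "(\<lambda>m. tm m * (b - d m)) \<longlonglongrightarrow> 0 * (b - 0)"
          using tlim t dlim unfolding d_def by (intro tendsto_intros) auto
        ultimately show ?thesis using LIMSEQ_le[of "\<lambda>m. tm m * (b - d m)" _ "\<lambda>m. a \<bullet> wm m"] wm_ge[OF ab]
          by fastforce
      qed
      obtain a0 b0 where ab0: "(a0,b0) \<in> K" "a0 \<bullet> w \<noteq> 0"
      proof (rule ccontr)
        assume "\<not> thesis"
        with that have "\<forall>(a,b)\<in>K. a \<bullet> w = 0" by blast
        then have "\<And>y. y \<in> fst ` K \<Longrightarrow> orthogonal w y"
          by (auto simp: orthogonal_def inner_commute)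
        from orthogonal_to_span[OF wspan this] have "w \<bullet> w = 0" by (simp add: orthogonal_def)
        then show False using nw1 by simp
      qed
      define K0 where "K0 = {p \<in> K. fst p \<bullet> w = 0}"
      have K0sub: "K0 \<subset> K" using ab0 unfolding K0_def by force
      obtain \<delta>0 where d0: "\<delta>0 > 0" "\<And>x. (\<forall>(a,b)\<in>K0. a \<bullet> x \<ge> b - \<delta>0) \<Longrightarrow>
           (\<exists>s. (\<forall>(a,b)\<in>K0. a \<bullet> s \<ge> b) \<and> dist x s \<le> \<epsilon>)"
        using psubset.IH[OF K0sub psubset.prems] by blast
      have ev1: "\<forall>\<^sub>F m in sequentially. \<forall>p\<in>K - K0. fst p \<bullet> X (r m) \<ge> snd p + norm (fst p) * \<epsilon>"
      proof (rule eventually_ball_finite)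
        show "finite (K - K0)" using psubset.hyps by simp
        show "\<forall>p\<in>K - K0. \<forall>\<^sub>F m in sequentially. fst p \<bullet> X (r m) \<ge> snd p + norm (fst p) * \<epsilon>"
        proof
          fix p assume p: "p \<in> K - K0"
          obtain a b where pab: "p = (a,b)" by (cases p)
          define c where "c = a \<bullet> w"
          have c: "c > 0" using aw_ge[of a b] p pab unfolding c_def K0_def by fastforce
          define M where "M = \<bar>b\<bar> + norm a * \<epsilon> + 1"
          have M: "M > 0" unfolding M_def using psubset.prems by (simp add: add_nonneg_pos)
          have "(\<lambda>m. a \<bullet> wm m) \<longlonglongrightarrow> c" unfolding c_def by (intro tendsto_intros wlim)
          then have e1: "\<forall>\<^sub>F m in sequentially. c / 2 < a \<bullet> wm m"
            using c by (intro order_tendstoD(1)) auto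
          have e2: "\<forall>\<^sub>F m in sequentially. tm m < c / (2 * M)"
            using tlim t c M by (intro order_tendstoD(2)) auto
          show "\<forall>\<^sub>F m in sequentially. fst p \<bullet> X (r m) \<ge> snd p + norm (fst p) * \<epsilon>"
            using e1 e2
          proof eventually_elim
            case (elim m)
            have "tm m * M < c / 2" using elim(2) M by (simp add: field_simps)
            then have "tm m * M < a \<bullet> wm m" using elim(1) by linarith
            then have "M < (a \<bullet> wm m) / tm m" using tpos[of m] by (simp add: field_simps)
            moreover have "a \<bullet> X (r m) = (a \<bullet> wm m) / tm m"
              unfolding Xeq by (simp add: inner_scaleR_right)
            ultimately show ?case unfolding pab M_def by auto
          qed
        qed
      qed
      have ev2: "\<forall>\<^sub>F m in sequentially. d m < \<delta>0"
        using dlim d0(1) unfolding d_def by (intro order_tendstoD(2)) auto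
      obtain m where m1: "\<forall>p\<in>K - K0. fst p \<bullet> X (r m) \<ge> snd p + norm (fst p) * \<epsilon>"
        and m2: "d m < \<delta>0"
        using eventually_sequentially[THEN iffD1, OF eventually_conj[OF ev1 ev2]] by blast
      have "\<forall>(a,b)\<in>K0. a \<bullet> X (r m) \<ge> b - \<delta>0"
        using X(2)[of "r m"] m2 unfolding rel_def d_def K0_def by fastforce
      then obtain s where s: "\<forall>(a,b)\<in>K0. a \<bullet> s \<ge> b" "dist (X (r m)) s \<le> \<epsilon>"
        using d0(2) by blast
      have "Sf s" unfolding Sf_def
      proof (clarify)
        fix a b assume ab: "(a,b) \<in> K"
        show "b \<le> a \<bullet> s"
        proof (cases "(a,b) \<in> K0")
          case True then show ?thesis using s(1) by auto
        next
          case False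
          then have h: "a \<bullet> X (r m) \<ge> b + norm a * \<epsilon>" using m1 ab by force
          have "a \<bullet> (X (r m) - s) \<le> norm a * norm (X (r m) - s)" by (rule norm_cauchy_schwarz)
          also have "\<dots> \<le> norm a * \<epsilon>" using s(2) by (intro mult_left_mono) (auto simp: dist_norm)
          finally show ?thesis using h by (simp add: inner_diff_right)
        qed
      qed
      then show False using X(3)[of "r m"] s(2) unfolding bad_def by blast
    qed

  qed
qed

theorem lemmaA3:
  fixes N :: nat
    and n :: "nat \<Rightarrow> 'a::euclidean_space"
    and \<beta> :: "nat \<Rightarrow> real"
    and Gi :: "nat \<Rightarrow> 'a set"
    and G :: "'a set"
  assumes N_pos: "N \<ge> 1"
    and unit: "\<forall>i\<in>{1..N}. norm (n i) = 1"
    and Gi_def: "\<forall>i\<in>{1..N}. Gi i = {x. n i \<bullet> x > \<beta> i}"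
    and G_def: "G = (\<Inter>i\<in>{1..N}. Gi i)"
    and G_domain: "G \<noteq> {} \<and> open G \<and> connected G"
    and faces: "\<forall>i\<in>{1..N}. frontier (Gi i) \<inter> frontier G \<noteq> {}"
  shows "(\<forall>\<epsilon>\<in>{0<..<1}. \<exists>R>0. \<forall>i\<in>{1..N}. \<forall>x\<in>frontier (Gi i) \<inter> frontier G.
            \<forall>y\<in>closure G. norm (x - y) < R \<longrightarrow> n i \<bullet> (y - x) \<ge> - \<epsilon> * norm (x - y))
       \<and> (Dfun {1..N} (\<lambda>j. frontier (Gi j) \<inter> frontier G) \<longlongrightarrow> 0) (at_right 0)"
proof -
  define I where "I = {1..N}"
  define F where "F = (\<lambda>j. frontier (Gi j) \<inter> frontier G)"
  have nz: "n i \<noteq> 0" if "i \<in> I" for i using unit that unfolding I_def by force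
  have fr: "frontier (Gi i) = {x. n i \<bullet> x = \<beta> i}" if "i \<in> I" for i
    using Gi_def that nz[OF that] frontier_halfspace_gt[of "n i" "\<beta> i"] unfolding I_def by simp
  have clG: "closure G \<subseteq> {x. n i \<bullet> x \<ge> \<beta> i}" if "i \<in> I" for i
  proof (rule closure_minimal)
    show "G \<subseteq> {x. n i \<bullet> x \<ge> \<beta> i}" using that Gi_def unfolding G_def I_def by force
    show "closed {x. n i \<bullet> x \<ge> \<beta> i}" by (rule closed_halfspace_ge)
  qed
  have Fsub: "n i \<bullet> y \<ge> \<beta> i \<and> n j \<bullet> y = \<beta> j" if "i \<in> I" "j \<in> I" "y \<in> F j" for i j y
  proof -
    have "y \<in> closure G" using that(3) unfolding F_def frontier_def by auto
    then show ?thesis using clG[OF that(1)] fr[OF that(2)] that(3) unfolding F_def by auto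
  qed
  obtain g where g: "g \<in> G" using G_domain by blast
  have gI: "n i \<bullet> g > \<beta> i" if "i \<in> I" for i using g that Gi_def unfolding G_def I_def by auto
  have Fchar: "s \<in> (\<Inter>j\<in>J. F j)"
    if J: "J \<subseteq> I" and s1: "\<forall>i\<in>I. n i \<bullet> s \<ge> \<beta> i" and s2: "\<forall>j\<in>J. n j \<bullet> s = \<beta> j" for J s
  proof -
    have inG: "s + t *\<^sub>R (g - s) \<in> G" if t: "0 < t" "t \<le> 1" for t
    proof -
      have "n i \<bullet> (s + t *\<^sub>R (g - s)) > \<beta> i" if i: "i \<in> I" for i
      proof -
        have "n i \<bullet> (s + t *\<^sub>R (g - s)) = (1 - t) * (n i \<bullet> s) + t * (n i \<bullet> g)"
          by (simp add: inner_add_right inner_diff_right algebra_simps)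
        moreover have "(1 - t) * (n i \<bullet> s) \<ge> (1 - t) * \<beta> i" using s1 i t by (intro mult_left_mono) auto
        moreover have "t * (n i \<bullet> g) > t * \<beta> i" using gI[OF i] t by simp
        ultimately show ?thesis by (simp add: algebra_simps)
      qed
      then show ?thesis using Gi_def unfolding G_def I_def by auto
    qed
    have sclG: "s \<in> closure G"
      unfolding closure_approachable
    proof (intro allI impI)
      fix e :: real assume e: "e > 0"
      define t where "t = min 1 (e / (2 * (norm (g - s) + 1)))"
      have t: "0 < t" "t \<le> 1" unfolding t_def using e by (auto simp: add_nonneg_pos)
      have "dist (s + t *\<^sub>R (g - s)) s = t * norm (g - s)" using t by (simp add: dist_norm)
      also have "\<dots> \<le> (e / (2 * (norm (g - s) + 1))) * (norm (g - s) + 1)"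
      proof -
        have "0 \<le> e / (2 * (norm (g - s) + 1))" using e by (simp add: add_nonneg_pos)
        then show ?thesis unfolding t_def by (intro mult_mono) auto
      qed
      also have "\<dots> = e / 2"
      proof -
        have "norm (g - s) + 1 > 0" by (simp add: add_nonneg_pos)
        then show ?thesis by (simp add: field_simps)
      qed
      also have "\<dots> < e" using e by simp
      finally show "\<exists>y\<in>G. dist y s < e" using inG[OF t] by blast
    qed
    show ?thesis
    proof
      fix j assume j: "j \<in> J"
      have jI: "j \<in> I" using J j by auto
      have "s \<notin> G" using s2 j jI Gi_def unfolding G_def I_def by fastforce
      then have "s \<in> frontier G" using sclG G_domain by (simp add: frontier_def interior_open)
      moreover have "s \<in> frontier (Gi j)" using fr[OF jI] s2 j by auto
      ultimately show "s \<in> F j" unfolding F_def by auto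
    qed
  qed
  have partA: "\<forall>\<epsilon>\<in>{0<..<1}. \<exists>R>0. \<forall>i\<in>{1..N}. \<forall>x\<in>frontier (Gi i) \<inter> frontier G.
            \<forall>y\<in>closure G. norm (x - y) < R \<longrightarrow> n i \<bullet> (y - x) \<ge> - \<epsilon> * norm (x - y)"
  proof (intro ballI exI[of _ 1] conjI allI impI)
    fix \<epsilon> :: real and i x y assume e: "\<epsilon> \<in> {0<..<1}" and i: "i \<in> {1..N}"
      and x: "x \<in> frontier (Gi i) \<inter> frontier G" and y: "y \<in> closure G"
    have "x \<in> F i" using x unfolding F_def by simp
    then have "n i \<bullet> x = \<beta> i" using Fsub[of i i x] i unfolding I_def by auto
    moreover have "n i \<bullet> y \<ge> \<beta> i" using clG[of i] i y unfolding I_def by auto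
    ultimately have "n i \<bullet> (y - x) \<ge> 0" by (simp add: inner_diff_right)
    moreover have "- \<epsilon> * norm (x - y) \<le> 0" using e by simp
    ultimately show "n i \<bullet> (y - x) \<ge> - \<epsilon> * norm (x - y)" by linarith
  qed simp
  define JJ where "JJ = {J. J \<noteq> {} \<and> J \<subseteq> I}"
  have finI: "finite I" unfolding I_def by simp
  have finJJ: "finite JJ" unfolding JJ_def using finI by (simp add: finite_Collect_subsets)
  have JJne: "JJ \<noteq> {}" proof -
    have "{1} \<in> JJ" using N_pos unfolding JJ_def I_def by auto
    then show ?thesis by blast
  qed
  define KK where "KK = (\<lambda>J. (\<lambda>i. (n i, \<beta> i)) ` I \<union> (\<lambda>j. (- n j, - \<beta> j)) ` J)"
  have bound: "\<exists>\<delta>>0. \<forall>r. 0 < r \<and> r < \<delta> \<longrightarrow> Dfun I F r \<le> ennreal \<epsilon>" if e: "\<epsilon> > 0" for \<epsilon>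
  proof -
    have "\<forall>J\<in>JJ. \<exists>\<delta>>0. \<forall>x. (\<forall>(a,b)\<in>KK J. a \<bullet> x \<ge> b - \<delta>) \<longrightarrow>
           (\<exists>s. (\<forall>(a,b)\<in>KK J. a \<bullet> s \<ge> b) \<and> dist x s \<le> \<epsilon>)"
    proof
      fix J assume "J \<in> JJ"
      then have "finite (KK J)" unfolding KK_def JJ_def using finI finite_subset by auto
      then show "\<exists>\<delta>>0. \<forall>x. (\<forall>(a,b)\<in>KK J. a \<bullet> x \<ge> b - \<delta>) \<longrightarrow>
           (\<exists>s. (\<forall>(a,b)\<in>KK J. a \<bullet> s \<ge> b) \<and> dist x s \<le> \<epsilon>)"
        using hoffman_qual e by blast
    qed
    then obtain f where f: "\<And>J. J \<in> JJ \<Longrightarrow> f J > 0"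
      "\<And>J x. J \<in> JJ \<Longrightarrow> (\<forall>(a,b)\<in>KK J. a \<bullet> x \<ge> b - f J) \<Longrightarrow>
           (\<exists>s. (\<forall>(a,b)\<in>KK J. a \<bullet> s \<ge> b) \<and> dist x s \<le> \<epsilon>)"
      by metis
    define \<delta> where "\<delta> = Min (f ` JJ)"
    have dpos: "\<delta> > 0" unfolding \<delta>_def using finJJ JJne f(1) by auto
    have dle: "\<delta> \<le> f J" if "J \<in> JJ" for J unfolding \<delta>_def using finJJ that by auto
    have "Dfun I F r \<le> ennreal \<epsilon>" if r: "0 < r" "r < \<delta>" for r
    proof -
      have Jb: "(SUP x\<in>(\<Inter>j\<in>J. nbhd r (F j)). set_dist_inf x (\<Inter>j\<in>J. F j)) \<le> ennreal \<epsilon>"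
        if J: "J \<in> JJ" for J
      proof (rule SUP_least)
        fix x assume x: "x \<in> (\<Inter>j\<in>J. nbhd r (F j))"
        have near: "\<exists>y\<in>F j. dist x y < f J" if j: "j \<in> J" for j
        proof -
          have "x \<in> nbhd r (F j)" using x j by auto
          then have "F j \<noteq> {}" "infdist x (F j) \<le> r" unfolding nbhd_def by (auto split: if_splits)
          moreover have "r < f J" using r dle[OF J] by simp
          ultimately show ?thesis using infdist_lt_ex[of "F j" x "f J"] by simp
        qed
        have JI: "J \<subseteq> I" "J \<noteq> {}" using J unfolding JJ_def by auto
        obtain j0 where j0: "j0 \<in> J" using JI by auto
        obtain y0 where y0: "y0 \<in> F j0" "dist x y0 < f J" using near[OF j0] by blast
        have cs: "\<bar>a \<bullet> (x - y)\<bar> \<le> dist x y" if "norm a = 1" for a y :: 'a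
          using Cauchy_Schwarz_ineq2[of a "x - y"] that by (simp add: dist_norm)
        have "\<forall>(a,b)\<in>KK J. a \<bullet> x \<ge> b - f J"
        proof (clarify)
          fix a b assume ab: "(a,b) \<in> KK J"
          then consider (i) i where "i \<in> I" "a = n i" "b = \<beta> i"
            | (j) j where "j \<in> J" "a = - n j" "b = - \<beta> j" unfolding KK_def by blast
          then show "b - f J \<le> a \<bullet> x"
          proof cases
            case i
            have "n i \<bullet> y0 \<ge> \<beta> i" using Fsub[of i j0 y0] i(1) j0 JI y0 by auto
            moreover have "\<bar>n i \<bullet> (x - y0)\<bar> \<le> dist x y0" using cs unit i(1) unfolding I_def by auto
            ultimately show ?thesis using i y0(2) by (simp add: inner_diff_right)
          next
            case j
            obtain y where y: "y \<in> F j" "dist x y < f J" using near[OF j(1)] by blast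
            have "n j \<bullet> y = \<beta> j" using Fsub[of j j y] j(1) JI y by auto
            moreover have "\<bar>n j \<bullet> (x - y)\<bar> \<le> dist x y" using cs unit j(1) JI unfolding I_def by auto
            ultimately show ?thesis using j y(2) by (simp add: inner_diff_right)
          qed
        qed
        then obtain s where s: "\<forall>(a,b)\<in>KK J. a \<bullet> s \<ge> b" "dist x s \<le> \<epsilon>" using f(2)[OF J] by blast
        have s1: "\<forall>i\<in>I. n i \<bullet> s \<ge> \<beta> i" using s(1) unfolding KK_def by auto
        have s2: "\<forall>j\<in>J. n j \<bullet> s = \<beta> j"
        proof
          fix j assume j: "j \<in> J"
          have "(- n j, - \<beta> j) \<in> KK J" using j unfolding KK_def by blast
          then have "- n j \<bullet> s \<ge> - \<beta> j" using s(1) by fastforce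
          moreover have "n j \<bullet> s \<ge> \<beta> j" using s1 j JI by auto
          ultimately show "n j \<bullet> s = \<beta> j" by simp
        qed
        have sin: "s \<in> (\<Inter>j\<in>J. F j)" using Fchar[OF JI(1) s1 s2] .
        then have "set_dist_inf x (\<Inter>j\<in>J. F j) = ennreal (infdist x (\<Inter>j\<in>J. F j))"
          unfolding set_dist_inf_def by auto
        also have "\<dots> \<le> ennreal \<epsilon>"
          using infdist_le2[OF sin s(2)] by (simp add: ennreal_leI)
        finally show "set_dist_inf x (\<Inter>j\<in>J. F j) \<le> ennreal \<epsilon>" .
      qed
      have "Dfun I F r = (SUP J\<in>JJ. (SUP x\<in>(\<Inter>j\<in>J. nbhd r (F j)). set_dist_inf x (\<Inter>j\<in>J. F j)))"
        unfolding Dfun_def JJ_def using r by simp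
      then show ?thesis by (simp only:) (rule SUP_least, rule Jb)
    qed
    then show ?thesis using dpos by blast
  qed
  have partB: "(Dfun I F \<longlongrightarrow> 0) (at_right 0)"
  proof (rule order_tendstoI)
    fix a :: ennreal assume "a < 0" then show "\<forall>\<^sub>F r in at_right 0. a < Dfun I F r" by simp
  next
    fix a :: ennreal assume a: "0 < a"
    obtain y where y: "0 < y" "y < a" using dense[OF a] by blast
    have ylt: "y < top" using y(2) top_greatest by (rule less_le_trans)
    then have ytop: "y \<noteq> top" by simp
    define \<epsilon> where "\<epsilon> = enn2real y"
    have e: "\<epsilon> > 0" unfolding \<epsilon>_def using y(1) ylt by (simp add: enn2real_positive_iff)
    have ye: "ennreal \<epsilon> = y" unfolding \<epsilon>_def using ylt by (rule ennreal_enn2real)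
    obtain \<delta> where d: "\<delta> > 0" "\<And>r. 0 < r \<and> r < \<delta> \<Longrightarrow> Dfun I F r \<le> ennreal \<epsilon>" using bound[OF e] by blast
    show "\<forall>\<^sub>F r in at_right 0. Dfun I F r < a"
      using eventually_at_right_real[OF d(1)]
    proof eventually_elim
      case (elim r)
      then have "Dfun I F r \<le> y" using d(2)[of r] ye by simp
      then show ?case using y(2) by (rule le_less_trans)
    qed
  qed
  show ?thesis using partA partB unfolding I_def F_def by (rule conjI)
qed

end
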